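(* Let $(S,\curlyvee)$ be an algebra with one binary operation. Then $(S,\curlyvee)$ is functional (isomorphic to a set of partial functions closed under restricted union, with $\curlyvee$ interpreted as restricted union) if and only if $(S,\curlyvee)$ is a $\curlyvee$-algebra. Moreover, the class of $\curlyvee$-algebras consists of (algebras isomorphic to) subdirect products of flat $\curlyvee$-algebras.
   Context: For sets $X,Y$, $\mathrm{Par}(X,Y)$ is the set of partial functions from $X$ to $Y$, viewed as sets of ordered pairs. For $f,g\in\mathrm{Par}(X,Y)$ let $g-f$ denote the restriction of $g$ to $X\setminus\mathrm{dom}(f)$. Restricted union is $f\curlyvee g=(f-g)\cup(f\cap g)\cup(g-f)$ (the restriction of the relation $f\cup g$ to the points where it is single-valued). An algebra $(S,\curlyvee)$ is functional if it is isomorphic to $(A,\curlyvee)$ for some $A\subseteq\mathrm{Par}(X,Y)$ closed under $\curlyvee$, for some sets $X,Y$. A left regular band is a set with a binary operation $\sqcup$ satisfying $a\sqcup(b\sqcup c)=(a\sqcup b)\sqcup c$, $a\sqcup a=a$, $a\sqcup b=(a\sqcup b)\sqcup a$. On an algebra with operation $\sqcup$ write $a\lesssim b$ iff $b\sqcup a=b$. A $\curlyvee$-algebra is an algebra $(S,\curlyvee)$ such that, defining $a\sqcup b=a\curlyvee(a\curlyvee b)$ for all $a,b\in S$: $(S,\sqcup)$ is a left regular band; $\curlyvee$ is commutative and idempotent; $(a\curlyvee b)\sqcup(a\sqcup b)=a\sqcup b$; $a\sqcup(b\curlyvee c)=(a\sqcup b)\curlyvee(a\sqcup c)$; and for all $a,b,c,d$,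 if $d\lesssim a$, $d\lesssim b$, $d\lesssim c$, $d\lesssim a\curlyvee b$ and $d\lesssim b\curlyvee c$ then $d\lesssim a\curlyvee c$. A flat $\curlyvee$-algebra is an algebra $(S,\curlyvee)$ with an element $0\in S$ such that $a\curlyvee b=0$ whenever $a,b$ are distinct and both different from $0$, and $a\curlyvee a=a$, $a\curlyvee 0=0\curlyvee a=a$ for all $a\in S$. *)

theory Defs
  imports Main "HOL-Library.FuncSet"
begin

definition Par :: "'x set \<Rightarrow> 'y set \<Rightarrow> ('x \<times> 'y) set set" where
  "Par X Y = {f. f \<subseteq> X \<times> Y \<and> (\<forall>x y z. (x, y) \<in> f \<and> (x, z) \<in> f \<longrightarrow> y = z)}"

definition pminus :: "('x \<times> 'y) set \<Rightarrow> ('x \<times> 'y) set \<Rightarrow> ('x \<times> 'y) set" where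
  "pminus g f = {(x, y) \<in> g. x \<notin> Domain f}"

definition rvee :: "('x \<times> 'y) set \<Rightarrow> ('x \<times> 'y) set \<Rightarrow> ('x \<times> 'y) set" where
  "rvee f g = pminus f g \<union> (f \<inter> g) \<union> pminus g f"

definition closed_op :: "'a set \<Rightarrow> ('a \<Rightarrow> 'a \<Rightarrow> 'a) \<Rightarrow> bool" where
  "closed_op S op \<longleftrightarrow> (\<forall>a\<in>S. \<forall>b\<in>S. op a b \<in> S)"

definition iso_onto :: "'a set \<Rightarrow> ('a \<Rightarrow> 'a \<Rightarrow> 'a) \<Rightarrow> 'b set \<Rightarrow> ('b \<Rightarrow> 'b \<Rightarrow> 'b) \<Rightarrow> ('a \<Rightarrow> 'b) \<Rightarrow> bool" where
  "iso_onto S op A op' h \<longleftrightarrow> bij_betw h S A \<and> (\<forall>a\<in>S. \<forall>b\<in>S. h (op a b) = op' (h a) (h b))"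

definition functional_rep ::
  "'a set \<Rightarrow> ('a \<Rightarrow> 'a \<Rightarrow> 'a) \<Rightarrow> 'x set \<Rightarrow> 'y set \<Rightarrow> ('x \<times> 'y) set set \<Rightarrow> ('a \<Rightarrow> ('x \<times> 'y) set) \<Rightarrow> bool" where
  "functional_rep S op X Y A h \<longleftrightarrow>
     A \<subseteq> Par X Y \<and> (\<forall>f\<in>A. \<forall>g\<in>A. rvee f g \<in> A) \<and> iso_onto S op A rvee h"

definition sqcup :: "('a \<Rightarrow> 'a \<Rightarrow> 'a) \<Rightarrow> 'a \<Rightarrow> 'a \<Rightarrow> 'a" where
  "sqcup op a b = op a (op a b)"

definition lesssim :: "('a \<Rightarrow> 'a \<Rightarrow> 'a) \<Rightarrow> 'a \<Rightarrow> 'a \<Rightarrow> bool" where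
  "lesssim op a b \<longleftrightarrow> sqcup op b a = b"

definition vee_algebra :: "'a set \<Rightarrow> ('a \<Rightarrow> 'a \<Rightarrow> 'a) \<Rightarrow> bool" where
  "vee_algebra S op \<longleftrightarrow>
     closed_op S op \<and>
     (\<forall>a\<in>S. \<forall>b\<in>S. \<forall>c\<in>S. sqcup op a (sqcup op b c) = sqcup op (sqcup op a b) c) \<and>
     (\<forall>a\<in>S. sqcup op a a = a) \<and>
     (\<forall>a\<in>S. \<forall>b\<in>S. sqcup op a b = sqcup op (sqcup op a b) a) \<and>
     (\<forall>a\<in>S. \<forall>b\<in>S. op a b = op b a) \<and>
     (\<forall>a\<in>S. op a a = a) \<and>
     (\<forall>a\<in>S. \<forall>b\<in>S. sqcup op (op a b) (sqcup op a b) = sqcup op a b) \<and>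
     (\<forall>a\<in>S. \<forall>b\<in>S. \<forall>c\<in>S. sqcup op a (op b c) = op (sqcup op a b) (sqcup op a c)) \<and>
     (\<forall>a\<in>S. \<forall>b\<in>S. \<forall>c\<in>S. \<forall>d\<in>S.
        lesssim op d a \<and> lesssim op d b \<and> lesssim op d c \<and>
        lesssim op d (op a b) \<and> lesssim op d (op b c) \<longrightarrow> lesssim op d (op a c))"

definition flat_algebra :: "'b set \<Rightarrow> ('b \<Rightarrow> 'b \<Rightarrow> 'b) \<Rightarrow> bool" where
  "flat_algebra F op \<longleftrightarrow>
     (\<exists>z\<in>F. \<forall>a\<in>F. \<forall>b\<in>F.
        (a \<noteq> b \<and> a \<noteq> z \<and> b \<noteq> z \<longrightarrow> op a b = z) \<and>
        op a a = a \<and> op a z = a \<and> op z a = a)"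

definition prod_op :: "'i set \<Rightarrow> ('i \<Rightarrow> 'b \<Rightarrow> 'b \<Rightarrow> 'b) \<Rightarrow> ('i \<Rightarrow> 'b) \<Rightarrow> ('i \<Rightarrow> 'b) \<Rightarrow> ('i \<Rightarrow> 'b)" where
  "prod_op I Op p q = (\<lambda>i. if i \<in> I then Op i (p i) (q i) else undefined)"

definition subdirect_product_of_flat ::
  "('i \<Rightarrow> 'b) set \<Rightarrow> 'i set \<Rightarrow> ('i \<Rightarrow> 'b set) \<Rightarrow> ('i \<Rightarrow> 'b \<Rightarrow> 'b \<Rightarrow> 'b) \<Rightarrow> bool" where
  "subdirect_product_of_flat B I F Op \<longleftrightarrow>
     (\<forall>i\<in>I. flat_algebra (F i) (Op i)) \<and>
     B \<subseteq> PiE I F \<and>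
     (\<forall>p\<in>B. \<forall>q\<in>B. prod_op I Op p q \<in> B) \<and>
     (\<forall>i\<in>I. (\<lambda>p. p i) ` B = F i)"

end

theory Submission
  imports Defs
begin


fun fop :: "'v option \<Rightarrow> 'v option \<Rightarrow> 'v option" where
  "fop None b = b"
| "fop (Some u) None = Some u"
| "fop (Some u) (Some v) = (if u = v then Some u else None)"

lemma fop_None2[simp]: "fop a None = a" by (cases a) auto


lemma fop_facts:
  fixes a b c d :: "'v option"
  shows "sqcup fop a (sqcup fop b c) = sqcup fop (sqcup fop a b) c"
    "sqcup fop a a = a"
    "sqcup fop a b = sqcup fop (sqcup fop a b) a"
    "fop a b = fop b a" "fop a a = a"
    "sqcup fop (fop a b) (sqcup fop a b) = sqcup fop a b"
    "sqcup fop a (fop b c) = fop (sqcup fop a b) (sqcup fop a c)"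
    "lesssim fop d a \<and> lesssim fop d b \<and> lesssim fop d c \<and>
        lesssim fop d (fop a b) \<and> lesssim fop d (fop b c) \<longrightarrow> lesssim fop d (fop a c)"
  unfolding sqcup_def lesssim_def
  by (cases a; cases b; cases c; cases d; auto)+

lemma sep_vee:
  fixes S :: "'a set" and op and J :: "'j set" and \<psi> :: "'j \<Rightarrow> 'a \<Rightarrow> 'v option"
  assumes cl: "closed_op S op"
    and hom: "\<And>j x y. j \<in> J \<Longrightarrow> x \<in> S \<Longrightarrow> y \<in> S \<Longrightarrow> \<psi> j (op x y) = fop (\<psi> j x) (\<psi> j y)"
    and sep: "\<And>x y. x \<in> S \<Longrightarrow> y \<in> S \<Longrightarrow> (\<And>j. j \<in> J \<Longrightarrow> \<psi> j x = \<psi> j y) \<Longrightarrow> x = y"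
  shows "vee_algebra S op"
proof -
  have c: "\<And>x y. x \<in> S \<Longrightarrow> y \<in> S \<Longrightarrow> op x y \<in> S" using cl unfolding closed_op_def by blast
  have cs: "\<And>x y. x \<in> S \<Longrightarrow> y \<in> S \<Longrightarrow> sqcup op x y \<in> S" unfolding sqcup_def using c by blast
  have hs: "\<And>j x y. j \<in> J \<Longrightarrow> x \<in> S \<Longrightarrow> y \<in> S \<Longrightarrow> \<psi> j (sqcup op x y) = sqcup fop (\<psi> j x) (\<psi> j y)"
    unfolding sqcup_def using hom c by simp
  have le: "\<And>x y. x \<in> S \<Longrightarrow> y \<in> S \<Longrightarrow> lesssim op x y \<longleftrightarrow> (\<forall>j\<in>J. lesssim fop (\<psi> j x) (\<psi> j y))"
  proof -
    fix x y assume xy: "x \<in> S" "y \<in> S"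
    show "lesssim op x y \<longleftrightarrow> (\<forall>j\<in>J. lesssim fop (\<psi> j x) (\<psi> j y))"
      unfolding lesssim_def using sep[OF cs[OF xy(2,1)] xy(2)] hs xy by metis
  qed
  note F = fop_facts(1,2,5,6,7)
  show ?thesis unfolding vee_algebra_def
  proof (intro conjI ballI impI)
    show "closed_op S op" by (rule cl)
  next
    fix a b c assume abc: "a \<in> S" "b \<in> S" "c \<in> S"
    show "sqcup op a (sqcup op b c) = sqcup op (sqcup op a b) c"
      by (rule sep) (simp_all add: abc cs hs F)
  next
    fix a assume a: "a \<in> S"
    show "sqcup op a a = a" by (rule sep) (simp_all add: a cs hs F)
    show "op a a = a" by (rule sep) (simp_all add: a c hom F)
  next
    fix a b assume ab: "a \<in> S" "b \<in> S"
    show "sqcup op a b = sqcup op (sqcup op a b) a"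
      by (rule sep) (simp_all add: ab cs hs fop_facts(3)[symmetric])
    show "op a b = op b a" by (rule sep) (simp_all add: ab c hom, rule fop_facts(4))
    show "sqcup op (op a b) (sqcup op a b) = sqcup op a b"
      by (rule sep) (simp_all add: ab c cs hs hom fop_facts(6))
  next
    fix a b c' assume abc: "a \<in> S" "b \<in> S" "c' \<in> S"
    show "sqcup op a (op b c') = op (sqcup op a b) (sqcup op a c')"
      by (rule sep) (simp_all add: abc c cs hs hom F)
  next
    fix a b c' d assume abc: "a \<in> S" "b \<in> S" "c' \<in> S" "d \<in> S"
    assume h: "lesssim op d a \<and> lesssim op d b \<and> lesssim op d c' \<and> lesssim op d (op a b) \<and> lesssim op d (op b c')"
    show "lesssim op d (op a c')"
      using h fop_facts(8) by (simp add: le abc c hom) blast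
  qed
qed

lemma option_eqI': "(\<And>y. a = Some y \<longleftrightarrow> b = Some y) \<Longrightarrow> a = b"
  by (cases a; cases b) auto

definition lookup :: "('x \<times> 'y) set \<Rightarrow> 'x \<Rightarrow> 'y option" where
  "lookup f x = (if x \<in> Domain f then Some (THE y. (x, y) \<in> f) else None)"

lemma lookup_Some:
  assumes "f \<in> Par X Y" shows "lookup f x = Some y \<longleftrightarrow> (x, y) \<in> f"
proof -
  have sv: "\<And>y z. (x, y) \<in> f \<Longrightarrow> (x, z) \<in> f \<Longrightarrow> y = z" using assms unfolding Par_def by blast
  show ?thesis
  proof
    assume "lookup f x = Some y"
    then have "x \<in> Domain f" "y = (THE y. (x, y) \<in> f)" unfolding lookup_def by (auto split: if_splits)
    then show "(x, y) \<in> f" using sv by (metis DomainE theI)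
  next
    assume h: "(x, y) \<in> f"
    then have "(THE y. (x, y) \<in> f) = y" using sv by blast
    then show "lookup f x = Some y" using h unfolding lookup_def by auto
  qed
qed

lemma lookup_None: "lookup f x = None \<longleftrightarrow> x \<notin> Domain f"
  unfolding lookup_def by auto

lemma lookup_rvee:
  assumes f: "f \<in> Par X Y" and g: "g \<in> Par X Y" and r: "rvee f g \<in> Par X Y"
  shows "lookup (rvee f g) x = fop (lookup f x) (lookup g x)"
proof (rule option_eqI')
  fix y
  have "(x, y) \<in> rvee f g \<longleftrightarrow> fop (lookup f x) (lookup g x) = Some y"
  proof -
    have m: "(x, y) \<in> rvee f g \<longleftrightarrow> ((x,y)\<in>f \<and> x\<notin>Domain g) \<or> ((x,y)\<in>f \<and> (x,y)\<in>g) \<or> ((x,y)\<in>g \<and> x \<notin> Domain f)"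
      unfolding rvee_def pminus_def by blast
    have o: "\<And>lf lg. ((lf = Some y \<and> lg = None) \<or> (lf = Some y \<and> lg = Some y) \<or> (lg = Some y \<and> lf = None)) \<longleftrightarrow> fop lf lg = Some y"
      by (case_tac lf; case_tac lg; auto)
    show ?thesis unfolding m lookup_Some[OF f, symmetric] lookup_Some[OF g, symmetric]
      lookup_None[symmetric] by (rule o)
  qed
  then show "lookup (rvee f g) x = Some y \<longleftrightarrow> fop (lookup f x) (lookup g x) = Some y"
    using lookup_Some[OF r] by simp
qed

lemma part1:
  assumes cl: "closed_op S op" and fr: "functional_rep S op X Y A h"
  shows "vee_algebra S op"
proof -
  have AP: "A \<subseteq> Par X Y" and Ac: "\<forall>f\<in>A. \<forall>g\<in>A. rvee f g \<in> A" and iso: "iso_onto S op A rvee h"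
    using fr unfolding functional_rep_def by blast+
  have bij: "bij_betw h S A" and hh: "\<forall>a\<in>S. \<forall>b\<in>S. h (op a b) = rvee (h a) (h b)"
    using iso unfolding iso_onto_def by blast+
  have hP: "\<And>s. s \<in> S \<Longrightarrow> h s \<in> Par X Y" using bij AP bij_betw_apply[OF bij] by blast
  show ?thesis
  proof (rule sep_vee[where J = X and \<psi> = "\<lambda>x s. lookup (h s) x"])
    show "closed_op S op" by (rule cl)
  next
    fix j x y assume a: "j \<in> X" "x \<in> S" "y \<in> S"
    show "lookup (h (op x y)) j = fop (lookup (h x) j) (lookup (h y) j)"
    proof -
      have "op x y \<in> S" using cl a unfolding closed_op_def by blast
      then have "rvee (h x) (h y) \<in> Par X Y" using hh hP[of "op x y"] a by simp
      then show ?thesis using hh a lookup_rvee[OF hP[OF a(2)] hP[OF a(3)]] by simp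
    qed
  next
    fix x y assume xy: "x \<in> S" "y \<in> S" and e: "\<And>j. j \<in> X \<Longrightarrow> lookup (h x) j = lookup (h y) j"
    have "h x = h y"
    proof (intro set_eqI iffI)
      fix p assume p: "p \<in> h x"
      obtain j v where pj: "p = (j, v)" by force
      have jX: "j \<in> X" using p pj hP[OF xy(1)] unfolding Par_def by auto
      show "p \<in> h y" using p e[OF jX] lookup_Some[OF hP[OF xy(1)], of j v]
        lookup_Some[OF hP[OF xy(2)], of j v] unfolding pj by simp
    next
      fix p assume p: "p \<in> h y"
      obtain j v where pj: "p = (j, v)" by force
      have jX: "j \<in> X" using p pj hP[OF xy(2)] unfolding Par_def by auto
      show "p \<in> h x" using p e[OF jX] lookup_Some[OF hP[OF xy(1)], of j v]
        lookup_Some[OF hP[OF xy(2)], of j v] unfolding pj by simp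
    qed
    then show "x = y" using bij xy unfolding bij_betw_def inj_on_def by blast
  qed
qed


lemma flat_emb:
  assumes "flat_algebra F op"
  obtains z where "z \<in> F" "\<And>a b. a \<in> F \<Longrightarrow> b \<in> F \<Longrightarrow>
     (if op a b = z then None else Some (op a b)) = fop (if a = z then None else Some a) (if b = z then None else Some b)"
proof -
  obtain z where z: "z \<in> F" and P: "\<forall>a\<in>F. \<forall>b\<in>F.
        (a \<noteq> b \<and> a \<noteq> z \<and> b \<noteq> z \<longrightarrow> op a b = z) \<and>
        op a a = a \<and> op a z = a \<and> op z a = a" using assms unfolding flat_algebra_def by blast
  show ?thesis
  proof (rule that[OF z])
    fix a b assume ab: "a \<in> F" "b \<in> F"
    show "(if op a b = z then None else Some (op a b)) = fop (if a = z then None else Some a) (if b = z then None else Some b)"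
      using P ab z by (cases "a = z"; cases "b = z"; cases "a = b"; simp)
  qed
qed

lemma part3:
  assumes cl: "closed_op S op" and sp: "subdirect_product_of_flat B I F Op"
    and iso: "iso_onto S op B (prod_op I Op) h"
  shows "vee_algebra S op"
proof -
  have fl: "\<And>i. i \<in> I \<Longrightarrow> flat_algebra (F i) (Op i)" and BP: "B \<subseteq> PiE I F"
    using sp unfolding subdirect_product_of_flat_def by blast+
  have bij: "bij_betw h S B" and hh: "\<forall>a\<in>S. \<forall>b\<in>S. h (op a b) = prod_op I Op (h a) (h b)"
    using iso unfolding iso_onto_def by blast+
  have hB: "\<And>s. s \<in> S \<Longrightarrow> h s \<in> PiE I F" using bij_betw_apply[OF bij] BP by blast
  define z where "z i = (SOME z. z \<in> F i \<and> (\<forall>a\<in>F i. \<forall>b\<in>F i.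
     (if Op i a b = z then None else Some (Op i a b)) = fop (if a = z then None else Some a) (if b = z then None else Some b)))" for i
  have zP: "(if Op i a b = z i then None else Some (Op i a b)) = fop (if a = z i then None else Some a) (if b = z i then None else Some b)"
    if zi: "i \<in> I" and zab: "a \<in> F i" "b \<in> F i" for i a b
  proof -
    obtain w where "w \<in> F i" "\<And>a b. a \<in> F i \<Longrightarrow> b \<in> F i \<Longrightarrow>
     (if Op i a b = w then None else Some (Op i a b)) = fop (if a = w then None else Some a) (if b = w then None else Some b)"
      using flat_emb[OF fl[OF zi]] by blast
    then have "\<exists>z. z \<in> F i \<and> (\<forall>a\<in>F i. \<forall>b\<in>F i.
     (if Op i a b = z then None else Some (Op i a b)) = fop (if a = z then None else Some a) (if b = z then None else Some b))" by blast
    from someI_ex[OF this] zab show ?thesis unfolding z_def by blast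
  qed
  show ?thesis
  proof (rule sep_vee[where J = I and \<psi> = "\<lambda>i s. if h s i = z i then None else Some (h s i)"])
    show "closed_op S op" by (rule cl)
  next
    fix j x y assume a: "j \<in> I" "x \<in> S" "y \<in> S"
    have eq: "h (op x y) j = Op j (h x j) (h y j)" using hh a unfolding prod_op_def by simp
    have hxy: "h x j \<in> F j" "h y j \<in> F j" using hB[OF a(2)] hB[OF a(3)] a(1) by (auto simp: PiE_def Pi_def)
    show "(if h (op x y) j = z j then None else Some (h (op x y) j)) =
         fop (if h x j = z j then None else Some (h x j)) (if h y j = z j then None else Some (h y j))"
      unfolding eq by (rule zP[OF a(1) hxy])
  next
    fix x y assume xy: "x \<in> S" "y \<in> S" and
      e: "\<And>j. j \<in> I \<Longrightarrow> (if h x j = z j then None else Some (h x j)) = (if h y j = z j then None else Some (h y j))"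
    have "h x = h y"
    proof
      fix j show "h x j = h y j"
      proof (cases "j \<in> I")
        case True then show ?thesis using e[OF True] by (auto split: if_splits)
      next
        case False then show ?thesis using hB[OF xy(1)] hB[OF xy(2)] by (simp add: PiE_def extensional_def)
      qed
    qed
    then show "x = y" using bij xy unfolding bij_betw_def inj_on_def by blast
  qed
qed



locale valg =
  fixes S :: "'a set" and op :: "'a \<Rightarrow> 'a \<Rightarrow> 'a"
  assumes va: "vee_algebra S op"
begin

abbreviation jn where "jn \<equiv> sqcup op"
abbreviation le where "le \<equiv> lesssim op"

lemma c: "x \<in> S \<Longrightarrow> y \<in> S \<Longrightarrow> op x y \<in> S"
  using va unfolding vee_algebra_def closed_op_def by blast
lemma js: "x \<in> S \<Longrightarrow> y \<in> S \<Longrightarrow> jn x y \<in> S"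
  unfolding sqcup_def using c by blast
lemma assoc: "a \<in> S \<Longrightarrow> b \<in> S \<Longrightarrow> d \<in> S \<Longrightarrow> jn a (jn b d) = jn (jn a b) d"
  using va unfolding vee_algebra_def by blast
lemma jidem: "a \<in> S \<Longrightarrow> jn a a = a"
  using va unfolding vee_algebra_def by blast
lemma A3: "a \<in> S \<Longrightarrow> b \<in> S \<Longrightarrow> jn (jn a b) a = jn a b"
  using va unfolding vee_algebra_def by metis
lemma comm: "a \<in> S \<Longrightarrow> b \<in> S \<Longrightarrow> op a b = op b a"
  using va unfolding vee_algebra_def by blast
lemma idem: "a \<in> S \<Longrightarrow> op a a = a"
  using va unfolding vee_algebra_def by blast
lemma A4: "a \<in> S \<Longrightarrow> b \<in> S \<Longrightarrow> jn (op a b) (jn a b) = jn a b"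
  using va unfolding vee_algebra_def by blast
lemma A5: "a \<in> S \<Longrightarrow> b \<in> S \<Longrightarrow> d \<in> S \<Longrightarrow> jn a (op b d) = op (jn a b) (jn a d)"
  using va unfolding vee_algebra_def by blast
lemma Q: "a \<in> S \<Longrightarrow> b \<in> S \<Longrightarrow> e \<in> S \<Longrightarrow> d \<in> S \<Longrightarrow> le d a \<Longrightarrow> le d b \<Longrightarrow> le d e \<Longrightarrow>
   le d (op a b) \<Longrightarrow> le d (op b e) \<Longrightarrow> le d (op a e)"
  using va unfolding vee_algebra_def by blast

lemma le_def': "le x y \<longleftrightarrow> jn y x = y" unfolding lesssim_def ..

lemma le_refl: "x \<in> S \<Longrightarrow> le x x" by (simp add: le_def' jidem)
lemma le_trans: "x \<in> S \<Longrightarrow> y \<in> S \<Longrightarrow> z \<in> S \<Longrightarrow> le x y \<Longrightarrow> le y z \<Longrightarrow> le x z"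
  unfolding le_def' by (metis assoc)
lemma le_j1: "x \<in> S \<Longrightarrow> y \<in> S \<Longrightarrow> le x (jn x y)"
  unfolding le_def' by (rule A3)
lemma le_j2: "x \<in> S \<Longrightarrow> y \<in> S \<Longrightarrow> le y (jn x y)"
  unfolding le_def' by (metis assoc jidem)
lemma le_join: "x \<in> S \<Longrightarrow> y \<in> S \<Longrightarrow> z \<in> S \<Longrightarrow> le x z \<Longrightarrow> le y z \<Longrightarrow> le (jn x y) z"
  unfolding le_def' by (metis assoc)
lemma le_op_j: "x \<in> S \<Longrightarrow> y \<in> S \<Longrightarrow> le (op x y) (jn x y)"
proof -
  assume xy: "x \<in> S" "y \<in> S"
  have "jn (op x y) (jn x y) = jn x y" by (rule A4[OF xy])
  moreover have "jn (jn (op x y) (jn x y)) (op x y) = jn (op x y) (jn x y)"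
    by (rule A3[OF c[OF xy] js[OF xy]])
  ultimately show ?thesis unfolding le_def' by simp
qed

lemma L6: "v \<in> S \<Longrightarrow> w \<in> S \<Longrightarrow> jn v w = w \<Longrightarrow> op v w = w"
proof -
  assume vw: "v \<in> S" "w \<in> S" and h: "jn v w = w"
  define t where "t = op v w"
  have tS: "t \<in> S" unfolding t_def using c vw by blast
  have "jn w v = w" using A3[OF vw] h by simp
  then have tw: "op w t = w" unfolding sqcup_def t_def using comm vw by metis
  have tv: "op t v = w" using h unfolding sqcup_def t_def using comm vw c by metis
  have "jn t t = op (jn t v) (jn t w)" using A5[OF tS vw] unfolding t_def by simp
  moreover have "jn t v = w" unfolding sqcup_def using tv tw comm tS vw by metis
  moreover have "jn t w = w" unfolding sqcup_def using tw comm tS vw by metis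
  ultimately have "t = op w w" using jidem[OF tS] by simp
  then show ?thesis using idem[OF vw(2)] unfolding t_def by simp
qed

lemma L3: "x \<in> S \<Longrightarrow> y \<in> S \<Longrightarrow> le x (jn (op x y) y)"
proof -
  assume xy: "x \<in> S" "y \<in> S"
  define u where "u = op x y"
  have uS: "u \<in> S" unfolding u_def using c xy by blast
  have "jn y (jn y x) = jn y x" using assoc[OF xy(2) xy(2) xy(1)] jidem[OF xy(2)] by simp
  then have o: "op y (jn y x) = jn y x" using L6 xy js by blast
  have "jn y u = op (jn y x) (jn y y)" unfolding u_def by (rule A5[OF xy(2) xy])
  also have "\<dots> = jn y x" using jidem[OF xy(2)] o comm js xy by metis
  finally have yu: "jn y u = jn y x" .
  have "le x (jn y x)" by (rule le_j2[OF xy(2) xy(1)])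
  moreover have "le (jn y u) (jn u y)"
    by (rule le_join[OF xy(2) uS js[OF uS xy(2)] le_j2[OF uS xy(2)] le_j1[OF uS xy(2)]])
  ultimately show ?thesis unfolding u_def[symmetric] using yu le_trans js xy uS by metis
qed

lemma L5: "a \<in> S \<Longrightarrow> b \<in> S \<Longrightarrow> le a b \<Longrightarrow> le b a \<Longrightarrow> le a (op a b) \<Longrightarrow> a = b"
proof -
  assume ab: "a \<in> S" "b \<in> S" and h: "le a b" "le b a" "le a (op a b)"
  define t where "t = op a b"
  have tS: "t \<in> S" unfolding t_def using c ab by blast
  have j1: "jn a b = a" using h(2) unfolding le_def' .
  have j2: "jn b a = b" using h(1) unfolding le_def' .
  have "jn t a = a" using A4[OF ab] j1 unfolding t_def by simp
  moreover have "jn t a = t" using h(3) unfolding le_def' t_def .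
  ultimately have ta: "t = a" by simp
  have "jn t b = b" using A4[OF ab(2) ab(1)] j2 comm[OF ab] unfolding t_def by simp
  moreover have "le b t" using le_trans[OF ab(2) ab(1) tS h(2)] h(3) unfolding t_def by simp
  then have "jn t b = t" unfolding le_def' .
  ultimately have "t = b" by simp
  then show ?thesis using ta by simp
qed

lemma le_mono: "a \<in> S \<Longrightarrow> b \<in> S \<Longrightarrow> w \<in> S \<Longrightarrow> le a b \<Longrightarrow> le (jn a w) (jn b w)"
  by (meson js le_j1 le_j2 le_join le_trans)

definition ideal :: "'a set \<Rightarrow> bool" where
  "ideal P \<longleftrightarrow> P \<subseteq> S \<and> (\<forall>x\<in>P. \<forall>y\<in>S. le y x \<longrightarrow> y \<in> P) \<and> (\<forall>x\<in>P. \<forall>y\<in>P. jn x y \<in> P)"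

lemma zorn_ideal:
  assumes bS: "b \<in> S" and dS: "d \<in> S" and nle: "\<not> le d b"
  shows "\<exists>P. ideal P \<and> b \<in> P \<and> d \<notin> P \<and> (\<forall>x\<in>S. x \<notin> P \<longrightarrow> (\<exists>p\<in>P. le d (jn p x)))"
proof -
  define AA where "AA = {P. ideal P \<and> b \<in> P \<and> d \<notin> P}"
  have D0: "{y\<in>S. le y b} \<in> AA"
    unfolding AA_def ideal_def using bS nle le_refl
    by (auto intro: le_trans le_join js)
  have "\<exists>M\<in>AA. \<forall>X\<in>AA. M \<subseteq> X \<longrightarrow> X = M"
  proof (rule subset_Zorn_nonempty)
    show "AA \<noteq> {}" using D0 by blast
  next
    fix C assume Cne: "C \<noteq> {}" and ch: "subset.chain AA C"
    have CA: "C \<subseteq> AA" and cmp: "\<forall>X\<in>C. \<forall>Y\<in>C. X \<subseteq> Y \<or> Y \<subseteq> X"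
      using ch unfolding subset_chain_def by blast+
    have "ideal (\<Union>C)" unfolding ideal_def
    proof (intro conjI ballI impI)
      show "\<Union>C \<subseteq> S" using CA unfolding AA_def ideal_def by blast
    next
      fix x y assume "x \<in> \<Union>C" "y \<in> S" "le y x"
      then show "y \<in> \<Union>C" using CA unfolding AA_def ideal_def by blast
    next
      fix x y assume x: "x \<in> \<Union>C" and y: "y \<in> \<Union>C"
      then obtain X Y where X: "X \<in> C" "x \<in> X" and Y: "Y \<in> C" "y \<in> Y" by blast
      have iX: "ideal X" and iY: "ideal Y" using X Y CA unfolding AA_def by blast+
      show "jn x y \<in> \<Union>C"
      proof (cases "X \<subseteq> Y")
        case True then show ?thesis using iY X Y unfolding ideal_def by blast
      next
        case False then have "Y \<subseteq> X" using cmp X Y by blast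
        then show ?thesis using iX X Y unfolding ideal_def by blast
      qed
    qed
    moreover have "b \<in> \<Union>C" "d \<notin> \<Union>C" using CA Cne unfolding AA_def by blast+
    ultimately show "\<Union>C \<in> AA" unfolding AA_def by blast
  qed
  then obtain P where PA: "P \<in> AA" and mx: "\<forall>X\<in>AA. P \<subseteq> X \<longrightarrow> X = P" by blast
  have iP: "ideal P" and bP: "b \<in> P" and dP: "d \<notin> P" using PA unfolding AA_def by blast+
  have PS: "P \<subseteq> S" using iP unfolding ideal_def by blast
  have key: "\<exists>p\<in>P. le d (jn p x)" if xS: "x \<in> S" and xP: "x \<notin> P" for x
  proof (rule ccontr)
    assume nd: "\<not> (\<exists>p\<in>P. le d (jn p x))"
    define P' where "P' = {w\<in>S. \<exists>p\<in>P. le w (jn p x)}"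
    have "ideal P'" unfolding ideal_def
    proof (intro conjI ballI impI)
      show "P' \<subseteq> S" unfolding P'_def by blast
    next
      fix w y assume "w \<in> P'" "y \<in> S" "le y w"
      then show "y \<in> P'" unfolding P'_def using le_trans js PS xS by blast
    next
      fix w y assume w: "w \<in> P'" and y: "y \<in> P'"
      then obtain p q where p: "p \<in> P" "le w (jn p x)" "w \<in> S" and q: "q \<in> P" "le y (jn q x)" "y \<in> S"
        unfolding P'_def by blast
      have pS: "p \<in> S" "q \<in> S" using p q PS by blast+
      have pq: "jn p q \<in> P" using iP p q unfolding ideal_def by blast
      have pqS: "jn p q \<in> S" using pq PS by blast
      have "le (jn p x) (jn (jn p q) x)"
        by (rule le_mono[OF pS(1) pqS xS le_j1[OF pS]])
      moreover have "le (jn q x) (jn (jn p q) x)"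
        by (rule le_mono[OF pS(2) pqS xS le_j2[OF pS]])
      ultimately have "le w (jn (jn p q) x)" "le y (jn (jn p q) x)"
        using p q le_trans js pS pqS xS by blast+
      then have "le (jn w y) (jn (jn p q) x)" using le_join js pqS xS p q by blast
      then show "jn w y \<in> P'" unfolding P'_def using pq js p q by blast
    qed
    moreover have "b \<in> P'" unfolding P'_def using bP bS le_j1 PS xS by blast
    moreover have "d \<notin> P'" unfolding P'_def using nd by blast
    moreover have "P \<subseteq> P'" unfolding P'_def using le_j1 PS xS by blast
    ultimately have "P' = P" using mx unfolding AA_def by blast
    moreover have "x \<in> P'" unfolding P'_def using le_j2 bP PS xS by blast
    ultimately show False using xP by blast
  qed
  show ?thesis using iP bP dP key by blast
qed

lemma hom_from:
  assumes bS: "b \<in> S" and dS: "d \<in> S" and nle: "\<not> le d b"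
  shows "\<exists>P (\<phi> :: 'a \<Rightarrow> 'a option). ideal P \<and> b \<in> P \<and> d \<notin> P \<and> (\<forall>x\<in>S. \<forall>y\<in>S. \<phi> (op x y) = fop (\<phi> x) (\<phi> y))
     \<and> (\<forall>x\<in>S. \<phi> x = None \<longleftrightarrow> x \<in> P)
     \<and> (\<forall>x\<in>S. \<forall>y\<in>S. x \<notin> P \<longrightarrow> y \<notin> P \<longrightarrow> (\<phi> x = \<phi> y \<longleftrightarrow> op x y \<notin> P))"
proof -
  obtain P where iP: "ideal P" and bP: "b \<in> P" and dP: "d \<notin> P"
    and key: "\<And>x. x \<in> S \<Longrightarrow> x \<notin> P \<Longrightarrow> \<exists>p\<in>P. le d (jn p x)"
    using zorn_ideal[OF bS dS nle] by blast
  have PS: "P \<subseteq> S" and dc: "\<And>x y. x \<in> P \<Longrightarrow> y \<in> S \<Longrightarrow> le y x \<Longrightarrow> y \<in> P"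
    and jc: "\<And>x y. x \<in> P \<Longrightarrow> y \<in> P \<Longrightarrow> jn x y \<in> P"
    using iP unfolding ideal_def by blast+
  have keyW: "finite W \<Longrightarrow> W \<subseteq> S - P \<Longrightarrow> \<exists>p\<in>P. \<forall>w\<in>W. le d (jn p w)" for W
  proof (induction W rule: finite_induct)
    case empty then show ?case using key[OF dS dP] by blast
  next
    case (insert w W)
    then obtain p where p: "p \<in> P" "\<forall>v\<in>W. le d (jn p v)" by blast
    obtain q where q: "q \<in> P" "le d (jn q w)" using key insert.prems by blast
    have pS: "p \<in> S" "q \<in> S" using p q PS by blast+
    have pq: "jn p q \<in> P" using jc p q by blast
    have pqS: "jn p q \<in> S" using pq PS by blast
    have "\<forall>v\<in>insert w W. le d (jn (jn p q) v)"
    proof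
      fix v assume v: "v \<in> insert w W"
      then have vS: "v \<in> S" using insert.prems by blast
      show "le d (jn (jn p q) v)"
      proof (cases "v = w")
        case True
        have "le (jn q w) (jn (jn p q) w)" by (rule le_mono[OF pS(2) pqS _ le_j2[OF pS]]) (use vS True in simp)
        then show ?thesis using q True le_trans dS js pS pqS vS by blast
      next
        case False
        then have "le d (jn p v)" using p v by blast
        moreover have "le (jn p v) (jn (jn p q) v)" by (rule le_mono[OF pS(1) pqS vS le_j1[OF pS]])
        ultimately show ?thesis using le_trans dS js pS pqS vS by blast
      qed
    qed
    then show ?case using pq by blast
  qed
  have F1: "op x y \<in> P" if "x \<in> P" "y \<in> P" for x y
    using dc[OF jc[OF that] c le_op_j] that PS by blast
  have F2: "op x y \<notin> P" if "x \<in> S" "x \<notin> P" "y \<in> P" for x y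
  proof
    assume "op x y \<in> P"
    then have "jn (op x y) y \<in> P" using jc that by blast
    then show False using dc L3 that PS by blast
  qed
  have up: "y \<notin> P" if "x \<in> S" "y \<in> S" "x \<notin> P" "le x y" for x y
    using dc that by blast
  have T: "op x z \<notin> P" if xyz: "x \<in> S" "y \<in> S" "z \<in> S" "x \<notin> P" "y \<notin> P" "z \<notin> P"
    and oxy: "op x y \<notin> P" and oyz: "op y z \<notin> P" for x y z
  proof
    assume oxz: "op x z \<in> P"
    have "finite {x, y, z, op x y, op y z}" by simp
    moreover have "{x, y, z, op x y, op y z} \<subseteq> S - P" using xyz oxy oyz c by blast
    ultimately obtain p where p: "p \<in> P" and pw: "\<forall>w\<in>{x, y, z, op x y, op y z}. le d (jn p w)"
      using keyW by blast
    have pS: "p \<in> S" using p PS by blast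
    have "le d (op (jn p x) (jn p z))"
    proof (rule Q)
      show "jn p x \<in> S" "jn p y \<in> S" "jn p z \<in> S" "d \<in> S" using js pS xyz dS by blast+
      show "le d (jn p x)" "le d (jn p y)" "le d (jn p z)" using pw by blast+
      show "le d (op (jn p x) (jn p y))" using pw A5[OF pS xyz(1,2)] by simp
      show "le d (op (jn p y) (jn p z))" using pw A5[OF pS xyz(2,3)] by simp
    qed
    then have "le d (jn p (op x z))" using A5[OF pS xyz(1,3)] by simp
    moreover have "jn p (op x z) \<in> P" using jc p oxz by blast
    ultimately show False using dc dS dP by blast
  qed
  define R where "R x y \<longleftrightarrow> y \<in> S \<and> y \<notin> P \<and> op x y \<notin> P" for x y
  define \<phi> where "\<phi> x = (if x \<in> S \<and> x \<notin> P then Some (SOME y. R x y) else None)" for x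
  have Rx: "R x x" if "x \<in> S" "x \<notin> P" for x using that idem unfolding R_def by simp
  have Req: "(SOME w. R x w) = (SOME w. R y w) \<longleftrightarrow> op x y \<notin> P"
    if xy: "x \<in> S" "y \<in> S" "x \<notin> P" "y \<notin> P" for x y
  proof
    assume e: "(SOME w. R x w) = (SOME w. R y w)"
    define r where "r = (SOME w. R x w)"
    have "R x r" unfolding r_def using someI[of "R x", OF Rx[OF xy(1,3)]] .
    moreover have "R y r" unfolding r_def e using someI[of "R y", OF Rx[OF xy(2,4)]] .
    ultimately show "op x y \<notin> P" unfolding R_def using T[of x r y] xy comm by metis
  next
    assume o: "op x y \<notin> P"
    have "R x = R y"
    proof (intro ext iffI)
      fix w assume "R x w" then show "R y w" unfolding R_def using T[of y x w] xy o comm by metis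
    next
      fix w assume "R y w" then show "R x w" unfolding R_def using T[of x y w] xy o by metis
    qed
    then show "(SOME w. R x w) = (SOME w. R y w)" by simp
  qed
  have same: "\<phi> (op x y) = \<phi> x" if xy: "x \<in> S" "y \<in> S" and np: "x \<notin> P" "op x y \<notin> P" for x y
  proof -
    have oS: "op x y \<in> S" using c xy by blast
    have "op (op x y) x = jn x y" unfolding sqcup_def using comm oS xy by metis
    moreover have "jn x y \<notin> P" using up[OF xy(1) js[OF xy] np(1) le_j1[OF xy]] .
    ultimately have "op (op x y) x \<notin> P" by simp
    then show ?thesis unfolding \<phi>_def using Req[OF oS xy(1) np(2) np(1)] np oS xy by simp
  qed
  have hom: "\<phi> (op x y) = fop (\<phi> x) (\<phi> y)" if xy: "x \<in> S" "y \<in> S" for x y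
  proof -
    have oS: "op x y \<in> S" using c xy by blast
    show ?thesis
    proof (cases "x \<in> P"; cases "y \<in> P")
      assume "x \<in> P" "y \<in> P" then show ?thesis using F1 unfolding \<phi>_def by simp
    next
      assume a: "x \<notin> P" "y \<in> P"
      then have "op x y \<notin> P" using F2 xy by blast
      then show ?thesis using same[of x y] xy a unfolding \<phi>_def by simp
    next
      assume a: "x \<in> P" "y \<notin> P"
      then have "op y x \<notin> P" using F2 xy by blast
      then have "\<phi> (op y x) = \<phi> y" using same[of y x] a xy by blast
      moreover have "\<phi> x = None" unfolding \<phi>_def using a by simp
      ultimately show ?thesis using comm[OF xy] by simp
    next
      assume a: "x \<notin> P" "y \<notin> P"
      show ?thesis
      proof (cases "op x y \<in> P")
        case True
        then have "(SOME w. R x w) \<noteq> (SOME w. R y w)" using Req xy a by blast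
        then show ?thesis using True a xy unfolding \<phi>_def by simp
      next
        case False
        then have "(SOME w. R x w) = (SOME w. R y w)" using Req xy a by blast
        moreover have "\<phi> (op x y) = \<phi> x" using same xy a False by blast
        ultimately show ?thesis using a xy unfolding \<phi>_def by simp
      qed
    qed
  qed
  have none: "\<forall>x\<in>S. \<phi> x = None \<longleftrightarrow> x \<in> P" unfolding \<phi>_def by simp
  have eqv: "\<forall>x\<in>S. \<forall>y\<in>S. x \<notin> P \<longrightarrow> y \<notin> P \<longrightarrow> (\<phi> x = \<phi> y \<longleftrightarrow> op x y \<notin> P)"
    unfolding \<phi>_def using Req by simp
  have hom': "\<forall>x\<in>S. \<forall>y\<in>S. \<phi> (op x y) = fop (\<phi> x) (\<phi> y)" using hom by blast
  have H: "ideal P \<and> b \<in> P \<and> d \<notin> P \<and> (\<forall>x\<in>S. \<forall>y\<in>S. \<phi> (op x y) = fop (\<phi> x) (\<phi> y))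
     \<and> (\<forall>x\<in>S. \<phi> x = None \<longleftrightarrow> x \<in> P)
     \<and> (\<forall>x\<in>S. \<forall>y\<in>S. x \<notin> P \<longrightarrow> y \<notin> P \<longrightarrow> (\<phi> x = \<phi> y \<longleftrightarrow> op x y \<notin> P))"
    using iP bP dP hom' none eqv by (intro conjI)
  show ?thesis using H by blast
qed

lemma separate:
  assumes sS: "s \<in> S" and tS: "t \<in> S" and ne: "s \<noteq> t"
  shows "\<exists>\<phi> :: 'a \<Rightarrow> 'a option. (\<forall>x\<in>S. \<forall>y\<in>S. \<phi> (op x y) = fop (\<phi> x) (\<phi> y)) \<and> None \<in> \<phi> ` S \<and> \<phi> s \<noteq> \<phi> t"
proof (cases "le s t \<and> le t s")
  case False
  then consider "\<not> le s t" | "\<not> le t s" by blast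
  then show ?thesis
  proof cases
    case 1
    from hom_from[OF tS sS 1] obtain P and \<phi> :: "'a \<Rightarrow> 'a option" where
      h: "t \<in> P" "s \<notin> P" "\<forall>x\<in>S. \<forall>y\<in>S. \<phi> (op x y) = fop (\<phi> x) (\<phi> y)" "\<forall>x\<in>S. \<phi> x = None \<longleftrightarrow> x \<in> P"
      by blast
    have "\<phi> t = None" "\<phi> s \<noteq> None" using h sS tS by blast+
    then show ?thesis using h(3) tS by (metis image_eqI)
  next
    case 2
    from hom_from[OF sS tS 2] obtain P and \<phi> :: "'a \<Rightarrow> 'a option" where
      h: "s \<in> P" "t \<notin> P" "\<forall>x\<in>S. \<forall>y\<in>S. \<phi> (op x y) = fop (\<phi> x) (\<phi> y)" "\<forall>x\<in>S. \<phi> x = None \<longleftrightarrow> x \<in> P"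
      by blast
    have "\<phi> s = None" "\<phi> t \<noteq> None" using h sS tS by blast+
    then show ?thesis using h(3) sS by (metis image_eqI)
  qed
next
  case True
  have oS: "op s t \<in> S" using c sS tS by blast
  have nle: "\<not> le s (op s t)" using L5[OF sS tS] True ne by blast
  from hom_from[OF oS sS nle] obtain P and \<phi> :: "'a \<Rightarrow> 'a option" where
    h: "ideal P" "op s t \<in> P" "s \<notin> P" "\<forall>x\<in>S. \<forall>y\<in>S. \<phi> (op x y) = fop (\<phi> x) (\<phi> y)" "\<forall>x\<in>S. \<phi> x = None \<longleftrightarrow> x \<in> P"
      "\<forall>x\<in>S. \<forall>y\<in>S. x \<notin> P \<longrightarrow> y \<notin> P \<longrightarrow> (\<phi> x = \<phi> y \<longleftrightarrow> op x y \<notin> P)"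
    by blast
  have "t \<notin> P" using h(1,3) True sS tS unfolding ideal_def by blast
  then have "\<phi> s \<noteq> \<phi> t" using h(2,3,6) sS tS by blast
  moreover have "\<phi> (op s t) = None" using h oS by blast
  ultimately show ?thesis using h(4) oS by (metis image_eqI)
qed

end

definition homs :: "'a set \<Rightarrow> ('a \<Rightarrow> 'a \<Rightarrow> 'a) \<Rightarrow> ('a \<Rightarrow> 'a option) set" where
  "homs S op = {\<phi>. (\<forall>x\<in>S. \<forall>y\<in>S. \<phi> (op x y) = fop (\<phi> x) (\<phi> y)) \<and> None \<in> \<phi> ` S}"

lemma sep_homs:
  assumes "vee_algebra S op" "s \<in> S" "t \<in> S" "\<forall>\<phi>\<in>homs S op. \<phi> s = \<phi> t"
  shows "s = t"
proof (rule ccontr)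
  assume "s \<noteq> t"
  then obtain \<phi> :: "'a \<Rightarrow> 'a option" where "(\<forall>x\<in>S. \<forall>y\<in>S. \<phi> (op x y) = fop (\<phi> x) (\<phi> y)) \<and> None \<in> \<phi> ` S \<and> \<phi> s \<noteq> \<phi> t"
    using valg.separate[OF valg.intro[OF assms(1)] assms(2,3)] by blast
  then show False using assms(4) unfolding homs_def by blast
qed

lemma fop_Some: "((lf = Some y \<and> lg = None) \<or> (lf = Some y \<and> lg = Some y) \<or> (lg = Some y \<and> lf = None)) \<longleftrightarrow> fop lf lg = Some y"
  by (cases lf; cases lg; auto)

lemma part2:
  fixes S :: "'a set" and op :: "'a \<Rightarrow> 'a \<Rightarrow> 'a"
  assumes va: "vee_algebra S op"
  shows "\<exists>(X :: ('a \<Rightarrow> 'a option) set) (Y :: 'a set) A h. functional_rep S op X Y A h"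
proof -
  define X where "X = homs S op"
  define g where "g s = {(\<phi>, v). \<phi> \<in> X \<and> \<phi> s = Some v}" for s
  have cl: "\<And>x y. x \<in> S \<Longrightarrow> y \<in> S \<Longrightarrow> op x y \<in> S" using va unfolding vee_algebra_def closed_op_def by blast
  have gP: "g s \<in> Par X UNIV" for s unfolding g_def Par_def by auto
  have gr: "rvee (g s) (g t) = g (op s t)" if st: "s \<in> S" "t \<in> S" for s t
  proof (intro set_eqI)
    fix p :: "('a \<Rightarrow> 'a option) \<times> 'a"
    obtain \<phi> v where p: "p = (\<phi>, v)" by force
    have D: "\<And>u. \<phi> \<in> Domain (g u) \<longleftrightarrow> \<phi> \<in> X \<and> \<phi> u \<noteq> None" unfolding g_def by auto
    have hm: "\<phi> \<in> X \<Longrightarrow> \<phi> (op s t) = fop (\<phi> s) (\<phi> t)" using st unfolding X_def homs_def by blast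
    have m: "(\<phi>, v) \<in> rvee (g s) (g t) \<longleftrightarrow> ((\<phi>,v)\<in>g s \<and> \<phi>\<notin>Domain (g t)) \<or> ((\<phi>,v)\<in>g s \<and> (\<phi>,v)\<in>g t) \<or> ((\<phi>,v)\<in>g t \<and> \<phi> \<notin> Domain (g s))"
      unfolding rvee_def pminus_def by blast
    have G: "\<And>u. (\<phi>, v) \<in> g u \<longleftrightarrow> \<phi> \<in> X \<and> \<phi> u = Some v" unfolding g_def by simp
    have "(\<phi>, v) \<in> rvee (g s) (g t) \<longleftrightarrow> (\<phi>, v) \<in> g (op s t)"
    proof (cases "\<phi> \<in> X")
      case True
      show ?thesis unfolding m G D hm[OF True] using True fop_Some[of "\<phi> s" v "\<phi> t"] by simp
    next
      case False then show ?thesis unfolding m G D by simp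
    qed
    then show "p \<in> rvee (g s) (g t) \<longleftrightarrow> p \<in> g (op s t)" unfolding p .
  qed
  have inj: "inj_on g S"
  proof (rule inj_onI)
    fix s t assume st: "s \<in> S" "t \<in> S" and e: "g s = g t"
    have "\<forall>\<phi>\<in>homs S op. \<phi> s = \<phi> t"
    proof
      fix \<phi> assume ph: "\<phi> \<in> homs S op"
      have "\<And>v. \<phi> s = Some v \<longleftrightarrow> \<phi> t = Some v"
      proof -
        fix v
        have "(\<phi>, v) \<in> g s \<longleftrightarrow> (\<phi>, v) \<in> g t" using e by simp
        then show "\<phi> s = Some v \<longleftrightarrow> \<phi> t = Some v" using ph unfolding g_def X_def by simp
      qed
      then show "\<phi> s = \<phi> t" by (rule option_eqI')
    qed
    then show "s = t" using sep_homs[OF va st] by blast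
  qed
  have "functional_rep S op X UNIV (g ` S) g"
    unfolding functional_rep_def iso_onto_def
  proof (intro conjI ballI)
    show "g ` S \<subseteq> Par X UNIV" using gP by blast
  next
    fix f1 f2 assume "f1 \<in> g ` S" "f2 \<in> g ` S"
    then show "rvee f1 f2 \<in> g ` S" using gr cl by blast
  next
    show "bij_betw g S (g ` S)" using inj by (simp add: bij_betw_def)
  next
    fix a b assume "a \<in> S" "b \<in> S"
    then show "g (op a b) = rvee (g a) (g b)" using gr by simp
  qed
  then show ?thesis by blast
qed

lemma fop_flat: "(a \<noteq> b \<and> a \<noteq> None \<and> b \<noteq> None \<longrightarrow> fop a b = None) \<and> fop a a = a \<and> fop a None = a \<and> fop None a = a"
  by (cases a; cases b; auto)

lemma part4:
  fixes S :: "'a set" and op :: "'a \<Rightarrow> 'a \<Rightarrow> 'a"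
  assumes va: "vee_algebra S op"
  shows "\<exists>(B :: (('a \<Rightarrow> 'a option) \<Rightarrow> 'a option) set) I F Op h.
            subdirect_product_of_flat B I F Op \<and> iso_onto S op B (prod_op I Op) h"
proof -
  define I where "I = homs S op"
  define h where "h s = (\<lambda>\<phi>. if \<phi> \<in> I then \<phi> s else undefined)" for s
  define F where "F \<phi> = \<phi> ` S" for \<phi> :: "'a \<Rightarrow> 'a option"
  define Op where "Op = (\<lambda>(\<phi> :: 'a \<Rightarrow> 'a option). fop :: 'a option \<Rightarrow> _)"
  have cl: "\<And>x y. x \<in> S \<Longrightarrow> y \<in> S \<Longrightarrow> op x y \<in> S" using va unfolding vee_algebra_def closed_op_def by blast
  have hh: "h (op s t) = prod_op I Op (h s) (h t)" if "s \<in> S" "t \<in> S" for s t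
    unfolding h_def prod_op_def Op_def I_def homs_def using that by (auto intro!: ext)
  have inj: "inj_on h S"
  proof (rule inj_onI)
    fix s t assume st: "s \<in> S" "t \<in> S" and e: "h s = h t"
    have "\<forall>\<phi>\<in>homs S op. \<phi> s = \<phi> t"
    proof
      fix \<phi> assume "\<phi> \<in> homs S op"
      then show "\<phi> s = \<phi> t" using fun_cong[OF e, of \<phi>] unfolding h_def I_def by simp
    qed
    then show "s = t" using sep_homs[OF va st] by blast
  qed
  have "subdirect_product_of_flat (h ` S) I F Op"
    unfolding subdirect_product_of_flat_def
  proof (intro conjI ballI)
    fix \<phi> assume ph: "\<phi> \<in> I"
    then have "None \<in> F \<phi>" unfolding I_def homs_def F_def by blast
    then show "flat_algebra (F \<phi>) (Op \<phi>)" unfolding flat_algebra_def Op_def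
      using fop_flat by blast
  next
    show "h ` S \<subseteq> PiE I F" unfolding h_def F_def by (auto simp: PiE_def Pi_def extensional_def)
  next
    fix p q assume "p \<in> h ` S" "q \<in> h ` S"
    then obtain s t where "s \<in> S" "t \<in> S" "p = h s" "q = h t" by blast
    then show "prod_op I Op p q \<in> h ` S" using hh[of s t] cl[of s t] by (metis image_eqI)
  next
    fix \<phi> assume "\<phi> \<in> I"
    then show "(\<lambda>p. p \<phi>) ` h ` S = F \<phi>" unfolding h_def F_def by (auto simp: image_image)
  qed
  moreover have "iso_onto S op (h ` S) (prod_op I Op) h"
    unfolding iso_onto_def using inj hh by (simp add: bij_betw_def)
  ultimately show ?thesis by blast
qed


theorem theorem4p7:
  fixes S :: "'a set" and op :: "'a \<Rightarrow> 'a \<Rightarrow> 'a"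
  assumes "closed_op S op"
  shows
    "((\<exists>(X :: 'x set) (Y :: 'y set) A h. functional_rep S op X Y A h) \<longrightarrow> vee_algebra S op)
     \<and> (vee_algebra S op \<longrightarrow>
          (\<exists>(X :: ('a \<Rightarrow> 'a option) set) (Y :: 'a set) A h. functional_rep S op X Y A h))
     \<and> ((\<exists>(B :: ('i \<Rightarrow> 'b) set) I F Op h.
            subdirect_product_of_flat B I F Op \<and> iso_onto S op B (prod_op I Op) h)
          \<longrightarrow> vee_algebra S op)
     \<and> (vee_algebra S op \<longrightarrow>
          (\<exists>(B :: (('a \<Rightarrow> 'a option) \<Rightarrow> 'a option) set) I F Op h.
            subdirect_product_of_flat B I F Op \<and> iso_onto S op B (prod_op I Op) h))"
  using part1[OF assms] part2[of S op] part3[OF assms] part4[of S op] by blast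

end
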